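(* For every integer $\ell\ge1$, let $E_1(-\Delta^{\mathbb{G}_\ell,N})$ be the smallest non-zero eigenvalue of the Neumann Laplacian $-\Delta^{\mathbb{G}_\ell,N}$ on $\ell^2(\mathbb{G}_\ell)$. Then $$\frac{15/2}{5^{\ell}}\le E_1(-\Delta^{\mathbb{G}_\ell,N})\le\frac{60}{5^{\ell}},$$ i.e. $\tfrac{15}{2}\,2^{-\ell\beta}\le E_1\le 60\cdot2^{-\ell\beta}$ with $\beta=\log5/\log2$.
   Context: Let $a_1=(0,0)$, $a_2=(1,0)$, $a_3=(1/2,\sqrt3/2)$, $T_0$ the unit equilateral triangle with these vertices, $T_{n+1}=T_n\cup(T_n+2^na_2)\cup(T_n+2^na_3)$. $\mathbb{G}_\ell$ is the set of vertices of the unit triangles (translates of $T_0$) in $T_\ell$, with $x\sim y$ iff $x\ne y$ lie on a common unit triangle. The Neumann Laplacian is the graph Laplacian of the induced subgraph: $-\Delta^{\mathbb{G}_\ell,N}f(x)=\sum_{y\in\mathbb{G}_\ell,y\sim x}(f(x)-f(y))$ for $f\in\ell^2(\mathbb{G}_\ell)$. *)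

theory Defs
  imports "HOL-Analysis.Analysis"
begin

type_synonym point = "real \<times> real"

definition sg_a1 :: point where "sg_a1 = (0, 0)"
definition sg_a2 :: point where "sg_a2 = (1, 0)"
definition sg_a3 :: point where "sg_a3 = (1/2, sqrt 3 / 2)"

definition sg_T0 :: "point set" where "sg_T0 = convex hull {sg_a1, sg_a2, sg_a3}"

text \<open>Translation vectors of the unit triangles making up T_n, following the recursion
  T_{n+1} = T_n \<union> (T_n + 2^n a2) \<union> (T_n + 2^n a3).\<close>
fun sg_offsets :: "nat \<Rightarrow> point set" where
  "sg_offsets 0 = {(0, 0)}"
| "sg_offsets (Suc n) = sg_offsets n \<union> (\<lambda>v. v + (2::real) ^ n *\<^sub>R sg_a2) ` sg_offsets n
                                     \<union> (\<lambda>v. v + (2::real) ^ n *\<^sub>R sg_a3) ` sg_offsets n"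

definition sg_unit_triangles :: "nat \<Rightarrow> point set set" where
  "sg_unit_triangles n = (\<lambda>v. (\<lambda>x. x + v) ` sg_T0) ` sg_offsets n"

definition sg_T :: "nat \<Rightarrow> point set" where
  "sg_T n = \<Union> (sg_unit_triangles n)"

definition tri_vertices :: "point \<Rightarrow> point set" where
  "tri_vertices v = {v + sg_a1, v + sg_a2, v + sg_a3}"

definition sg_G :: "nat \<Rightarrow> point set" where
  "sg_G l = (\<Union>v\<in>sg_offsets l. tri_vertices v)"

definition sg_adj :: "nat \<Rightarrow> point \<Rightarrow> point \<Rightarrow> bool" where
  "sg_adj l x y \<longleftrightarrow> x \<noteq> y \<and> (\<exists>v\<in>sg_offsets l. x \<in> tri_vertices v \<and> y \<in> tri_vertices v)"

text \<open>Neumann Laplacian -Delta^{G_l,N} (graph Laplacian of the induced subgraph).\<close>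
definition neg_neumann_laplacian :: "nat \<Rightarrow> (point \<Rightarrow> real) \<Rightarrow> point \<Rightarrow> real" where
  "neg_neumann_laplacian l f x = (\<Sum>y\<in>{y\<in>sg_G l. sg_adj l x y}. f x - f y)"

definition neumann_eigenvalues :: "nat \<Rightarrow> real set" where
  "neumann_eigenvalues l = {mu. \<exists>f. (\<exists>x\<in>sg_G l. f x \<noteq> 0) \<and>
       (\<forall>x\<in>sg_G l. neg_neumann_laplacian l f x = mu * f x)}"

definition E1_neumann :: "nat \<Rightarrow> real" where
  "E1_neumann l = Min (neumann_eigenvalues l - {0})"

end

theory Submission
  imports Defs "HOL-Library.Function_Algebras"
begin

definition phi :: "int \<times> int \<Rightarrow> point" where
  "phi p = (real_of_int (fst p) + real_of_int (snd p) / 2, real_of_int (snd p) * sqrt 3 / 2)"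

fun ZO :: "nat \<Rightarrow> (int \<times> int) set" where
  "ZO 0 = {(0, 0)}"
| "ZO (Suc n) = ZO n \<union> (\<lambda>v. (fst v + 2^n, snd v)) ` ZO n \<union> (\<lambda>v. (fst v, snd v + 2^n)) ` ZO n"

definition tri :: "int \<times> int \<Rightarrow> (int \<times> int) set" where
  "tri v = {v, (fst v + 1, snd v), (fst v, snd v + 1)}"

definition ZG :: "nat \<Rightarrow> (int \<times> int) set" where
  "ZG l = (\<Union>v\<in>ZO l. tri v)"

definition Zadj :: "nat \<Rightarrow> int \<times> int \<Rightarrow> int \<times> int \<Rightarrow> bool" where
  "Zadj l p q \<longleftrightarrow> p \<noteq> q \<and> (\<exists>v\<in>ZO l. p \<in> tri v \<and> q \<in> tri v)"

definition ZLap :: "nat \<Rightarrow> (int \<times> int \<Rightarrow> real) \<Rightarrow> int \<times> int \<Rightarrow> real" where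
  "ZLap l g p = (\<Sum>q\<in>{q\<in>ZG l. Zadj l p q}. g p - g q)"

lemma inj_phi: "inj phi"
proof (rule injI)
  fix p q assume h: "phi p = phi q"
  have s3: "sqrt 3 \<noteq> (0::real)" by simp
  from h have "real_of_int (snd p) * sqrt 3 / 2 = real_of_int (snd q) * sqrt 3 / 2"
    by (simp add: phi_def)
  hence "snd p = snd q" using s3 by simp
  moreover from h have "real_of_int (fst p) + real_of_int (snd p) / 2 = real_of_int (fst q) + real_of_int (snd q) / 2"
    by (simp add: phi_def)
  ultimately show "p = q" by (simp add: prod_eq_iff)
qed

lemma offsets_phi: "sg_offsets l = phi ` ZO l"
proof (induction l)
  case 0 show ?case by (simp add: phi_def)
next
  case (Suc n)
  have 1: "(\<lambda>v. v + (2::real) ^ n *\<^sub>R sg_a2) ` (phi ` ZO n) = phi ` ((\<lambda>v. (fst v + 2^n, snd v)) ` ZO n)"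
    by (force simp: image_image phi_def sg_a2_def)
  have 2: "(\<lambda>v. v + (2::real) ^ n *\<^sub>R sg_a3) ` (phi ` ZO n) = phi ` ((\<lambda>v. (fst v, snd v + 2^n)) ` ZO n)"
    by (force simp: image_image phi_def sg_a3_def field_simps)
  show ?case using Suc 1 2 by (simp add: image_Un)
qed

lemma tri_phi: "tri_vertices (phi v) = phi ` tri v"
  by (simp add: tri_vertices_def tri_def sg_a1_def sg_a2_def sg_a3_def phi_def field_simps)

lemma G_phi: "sg_G l = phi ` ZG l"
  by (auto simp: sg_G_def ZG_def offsets_phi tri_phi)

lemma adj_phi: "sg_adj l (phi p) (phi q) \<longleftrightarrow> Zadj l p q"
proof -
  have "phi p \<in> phi ` S \<longleftrightarrow> p \<in> S" for S p using inj_phi by (simp add: inj_image_mem_iff)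
  thus ?thesis using inj_phi
    by (auto simp: sg_adj_def Zadj_def offsets_phi tri_phi inj_eq)
qed

lemma lap_phi: "neg_neumann_laplacian l f (phi p) = ZLap l (f \<circ> phi) p"
proof -
  have "{y\<in>sg_G l. sg_adj l (phi p) y} = phi ` {q\<in>ZG l. Zadj l p q}"
    by (auto simp: G_phi adj_phi)
  hence "neg_neumann_laplacian l f (phi p) = (\<Sum>y\<in>phi ` {q\<in>ZG l. Zadj l p q}. f (phi p) - f y)"
    by (simp add: neg_neumann_laplacian_def)
  also have "\<dots> = (\<Sum>q\<in>{q\<in>ZG l. Zadj l p q}. f (phi p) - f (phi q))"
    by (rule sum.reindex_cong[where l=phi]) (auto intro: inj_on_subset[OF inj_phi])
  finally show ?thesis by (simp add: ZLap_def)
qed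

lemma eig_phi: "neumann_eigenvalues l =
  {mu. \<exists>g. (\<exists>p\<in>ZG l. g p \<noteq> 0) \<and> (\<forall>p\<in>ZG l. ZLap l g p = mu * g p)}"
proof (intro set_eqI iffI)
  fix mu assume "mu \<in> neumann_eigenvalues l"
  then obtain f where f1: "\<exists>x\<in>sg_G l. f x \<noteq> 0" and f2: "\<forall>x\<in>sg_G l. neg_neumann_laplacian l f x = mu * f x"
    by (auto simp: neumann_eigenvalues_def)
  show "mu \<in> {mu. \<exists>g. (\<exists>p\<in>ZG l. g p \<noteq> 0) \<and> (\<forall>p\<in>ZG l. ZLap l g p = mu * g p)}"
    using f1 f2 by (auto simp: G_phi lap_phi intro!: exI[of _ "f \<circ> phi"])
next
  fix mu assume "mu \<in> {mu. \<exists>g. (\<exists>p\<in>ZG l. g p \<noteq> 0) \<and> (\<forall>p\<in>ZG l. ZLap l g p = mu * g p)}"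
  then obtain g where g1: "\<exists>p\<in>ZG l. g p \<noteq> 0" and g2: "\<forall>p\<in>ZG l. ZLap l g p = mu * g p" by auto
  define f where "f = g \<circ> inv phi"
  have fg: "f \<circ> phi = g" using inj_phi by (auto simp: f_def fun_eq_iff)
  show "mu \<in> neumann_eigenvalues l"
    unfolding neumann_eigenvalues_def
  proof (intro CollectI exI[of _ f] conjI)
    have "\<forall>p. f (phi p) = g p" using fg by (simp add: fun_eq_iff)
    moreover obtain p where "p \<in> ZG l" "g p \<noteq> 0" using g1 by blast
    ultimately have "f (phi p) \<noteq> 0" by metis
    thus "\<exists>x\<in>sg_G l. f x \<noteq> 0" unfolding G_phi using \<open>p \<in> ZG l\<close> by blast
    show "\<forall>x\<in>sg_G l. neg_neumann_laplacian l f x = mu * f x"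
      using g2 fg by (auto simp: G_phi lap_phi)
  qed
qed

definition dbl :: "int \<times> int \<Rightarrow> int \<times> int" where
  "dbl v = (2 * fst v, 2 * snd v)"

definition sub3 :: "int \<times> int \<Rightarrow> (int \<times> int) set" where
  "sub3 v = {dbl v, (2 * fst v + 1, 2 * snd v), (2 * fst v, 2 * snd v + 1)}"

lemma mem_sub3: "q \<in> (\<Union>v\<in>S. sub3 v) \<longleftrightarrow> \<not> (odd (fst q) \<and> odd (snd q)) \<and> (fst q div 2, snd q div 2) \<in> S"
proof
  assume "q \<in> (\<Union>v\<in>S. sub3 v)"
  then obtain v where "v \<in> S" "q \<in> sub3 v" by blast
  thus "\<not> (odd (fst q) \<and> odd (snd q)) \<and> (fst q div 2, snd q div 2) \<in> S"
    by (auto simp: sub3_def dbl_def)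
next
  assume h: "\<not> (odd (fst q) \<and> odd (snd q)) \<and> (fst q div 2, snd q div 2) \<in> S"
  obtain a b where q: "q = (a, b)" by fastforce
  have "q \<in> sub3 (a div 2, b div 2)"
  proof (cases "even a")
    case True
    then show ?thesis
    proof (cases "even b")
      case True
      with \<open>even a\<close> show ?thesis by (auto simp: q sub3_def dbl_def elim!: evenE)
    next
      case False
      with \<open>even a\<close> show ?thesis by (auto simp: q sub3_def dbl_def elim!: evenE oddE)
    qed
  next
    case False
    with h q have "even b" by auto
    with False show ?thesis by (auto simp: q sub3_def dbl_def elim!: evenE oddE)
  qed
  thus "q \<in> (\<Union>v\<in>S. sub3 v)" using h q by auto
qed

lemma ZO_Suc_sub: "ZO (Suc l) = (\<Union>v\<in>ZO l. sub3 v)"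
proof (induction l)
  case 0
  show ?case by (auto simp: sub3_def dbl_def)
next
  case (Suc n)
  have sh1: "(\<Union>v\<in>(\<lambda>v. (fst v + d, snd v)) ` S. sub3 v) = (\<lambda>v. (fst v + 2*d, snd v)) ` (\<Union>v\<in>S. sub3 v)" for d S
    by (force simp: sub3_def dbl_def algebra_simps)
  have sh2: "(\<Union>v\<in>(\<lambda>v. (fst v, snd v + d)) ` S. sub3 v) = (\<lambda>v. (fst v, snd v + 2*d)) ` (\<Union>v\<in>S. sub3 v)" for d S
    by (force simp: sub3_def dbl_def algebra_simps)
  have "(\<Union>v\<in>ZO (Suc n). sub3 v) = (\<Union>v\<in>ZO n. sub3 v) \<union> (\<Union>v\<in>(\<lambda>v. (fst v + 2^n, snd v)) ` ZO n. sub3 v)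
        \<union> (\<Union>v\<in>(\<lambda>v. (fst v, snd v + 2^n)) ` ZO n. sub3 v)"
    by simp
  also have "\<dots> = ZO (Suc (Suc n))"
    unfolding sh1 sh2 Suc[symmetric] by simp
  finally show ?case by simp
qed

lemma finite_ZO: "finite (ZO l)"
  by (induction l) auto

lemma finite_tri: "finite (tri v)" by (simp add: tri_def)

lemma finite_ZG: "finite (ZG l)"
  by (simp add: ZG_def finite_ZO finite_tri)

lemma zero_ZO: "(0,0) \<in> ZO l"
  by (induction l) auto

lemma ZG_ne: "ZG l \<noteq> {}"
  using zero_ZO[of l] by (auto simp: ZG_def tri_def)

lemma tri_uniq:
  assumes "v \<noteq> w" "p \<in> tri v" "p \<in> tri w" "q \<in> tri v" "q \<in> tri w"
  shows "p = q"
  using assms by (auto simp: tri_def prod_eq_iff)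

lemma no_triple: "\<not> (p \<in> ZO l \<and> (fst p - 1, snd p) \<in> ZO l \<and> (fst p, snd p - 1) \<in> ZO l)"
proof (induction l arbitrary: p)
  case 0 show ?case by auto
next
  case (Suc l)
  show ?case
  proof
    assume h: "p \<in> ZO (Suc l) \<and> (fst p - 1, snd p) \<in> ZO (Suc l) \<and> (fst p, snd p - 1) \<in> ZO (Suc l)"
    obtain a b where p: "p = (a, b)" by fastforce
    from h have h': "\<not> (odd a \<and> odd b) \<and> (a div 2, b div 2) \<in> ZO l"
       "\<not> (odd (a - 1) \<and> odd b) \<and> ((a - 1) div 2, b div 2) \<in> ZO l"
       "\<not> (odd a \<and> odd (b - 1)) \<and> (a div 2, (b - 1) div 2) \<in> ZO l"
      unfolding ZO_Suc_sub mem_sub3 by (auto simp: p)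
    hence ea: "even a" and eb: "even b" by auto
    have "(a - 1) div 2 = a div 2 - 1" using ea by (auto elim!: evenE)
    moreover have "(b - 1) div 2 = b div 2 - 1" using eb by (auto elim!: evenE)
    ultimately show False using h' Suc.IH[of "(a div 2, b div 2)"] by auto
  qed
qed

lemma cnt_le2: "card {v\<in>ZO l. p \<in> tri v} \<le> 2"
proof -
  let ?a = "p" and ?b = "(fst p - 1, snd p)" and ?c = "(fst p, snd p - 1)"
  have sub: "{v\<in>ZO l. p \<in> tri v} \<subseteq> {?a, ?b, ?c} \<inter> ZO l"
    by (auto simp: tri_def)
  have "card ({?a, ?b, ?c} \<inter> ZO l) \<le> 2"
  proof -
    have "{?a, ?b, ?c} \<inter> ZO l \<subseteq> {?b, ?c} \<or> {?a, ?b, ?c} \<inter> ZO l \<subseteq> {?a, ?c} \<or> {?a, ?b, ?c} \<inter> ZO l \<subseteq> {?a, ?b}"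
      using no_triple[of p l] by auto
    moreover have "card {x, y} \<le> 2" for x y :: "int \<times> int" by (simp add: card_insert_le_m1)
    ultimately show ?thesis by (meson card_mono finite.emptyI finite.insertI order_trans)
  qed
  thus ?thesis using card_mono[OF _ sub] by (meson finite_Int finite.emptyI finite.insertI order_trans)
qed

definition enb :: "real \<Rightarrow> real \<Rightarrow> real \<Rightarrow> real \<Rightarrow> real \<Rightarrow> real \<Rightarrow> real" where
  "enb a b c a' b' c' = (a - b) * (a' - b') + (b - c) * (b' - c') + (a - c) * (a' - c')"

definition ZB :: "nat \<Rightarrow> (int \<times> int \<Rightarrow> real) \<Rightarrow> (int \<times> int \<Rightarrow> real) \<Rightarrow> real" where
  "ZB l g h = (\<Sum>v\<in>ZO l. enb (g v) (g (fst v + 1, snd v)) (g (fst v, snd v + 1))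
                              (h v) (h (fst v + 1, snd v)) (h (fst v, snd v + 1)))"

lemma adj_in_G: "Zadj l p q \<Longrightarrow> p \<in> ZG l \<and> q \<in> ZG l"
  by (auto simp: Zadj_def ZG_def)

lemma sum_tri3:
  "(\<Sum>p\<in>tri v. F p) = F v + F (fst v + 1, snd v) + F (fst v, snd v + 1)"
proof -
  have d: "v \<noteq> (fst v + 1, snd v)" "v \<noteq> (fst v, snd v + 1)" "(fst v + 1, snd v) \<noteq> (fst v, snd v + 1)"
    by (auto simp: prod_eq_iff)
  show ?thesis unfolding tri_def using d by (simp add: add.assoc)
qed

lemma sum_pairs_tri:
  "(\<Sum>(p, q)\<in>{(p, q). p \<in> tri v \<and> q \<in> tri v \<and> p \<noteq> q}. (h p - h q) * (g p - g q)) =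
   2 * enb (g v) (g (fst v + 1, snd v)) (g (fst v, snd v + 1)) (h v) (h (fst v + 1, snd v)) (h (fst v, snd v + 1))"
proof -
  have "(\<Sum>(p, q)\<in>{(p, q). p \<in> tri v \<and> q \<in> tri v \<and> p \<noteq> q}. (h p - h q) * (g p - g q)) =
        (\<Sum>(p, q)\<in>tri v \<times> tri v. (h p - h q) * (g p - g q))"
    by (rule sum.mono_neutral_left) (auto simp: finite_tri)
  also have "\<dots> = (\<Sum>p\<in>tri v. \<Sum>q\<in>tri v. (h p - h q) * (g p - g q))"
    by (rule sum.cartesian_product[symmetric])
  also have "\<dots> = 2 * enb (g v) (g (fst v + 1, snd v)) (g (fst v, snd v + 1)) (h v) (h (fst v + 1, snd v)) (h (fst v, snd v + 1))"
    unfolding sum_tri3 enb_def by algebra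
  finally show ?thesis .
qed

lemma green:
  "(\<Sum>p\<in>ZG l. h p * ZLap l g p) = ZB l g h"
proof -
  let ?A = "{(p, q). Zadj l p q}"
  have Asub: "?A \<subseteq> ZG l \<times> ZG l" using adj_in_G by auto
  have finA: "finite ?A" by (rule finite_subset[OF Asub]) (simp add: finite_ZG)
  have "(\<Sum>p\<in>ZG l. h p * ZLap l g p) = (\<Sum>p\<in>ZG l. \<Sum>q\<in>{q\<in>ZG l. Zadj l p q}. h p * (g p - g q))"
    by (simp add: ZLap_def sum_distrib_left)
  also have "\<dots> = (\<Sum>(p, q)\<in>(SIGMA p:ZG l. {q\<in>ZG l. Zadj l p q}). h p * (g p - g q))"
    by (rule sum.Sigma) (auto simp: finite_ZG)
  also have "(SIGMA p:ZG l. {q\<in>ZG l. Zadj l p q}) = ?A"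
    using adj_in_G by auto
  finally have S1: "(\<Sum>p\<in>ZG l. h p * ZLap l g p) = (\<Sum>(p, q)\<in>?A. h p * (g p - g q))" .
  have symA: "(\<lambda>(p, q). (q, p)) ` ?A = ?A"
    by (auto simp: Zadj_def image_iff)
  have "(\<Sum>(p, q)\<in>?A. h p * (g p - g q)) = (\<Sum>(p, q)\<in>(\<lambda>(p, q). (q, p)) ` ?A. h p * (g p - g q))"
    by (simp add: symA)
  also have "\<dots> = (\<Sum>(p, q)\<in>?A. h q * (g q - g p))"
    by (subst sum.reindex) (auto simp: inj_on_def case_prod_beta comp_def)
  finally have S2: "(\<Sum>(p, q)\<in>?A. h p * (g p - g q)) = (\<Sum>(p, q)\<in>?A. h q * (g q - g p))" .
  have S3: "2 * (\<Sum>(p, q)\<in>?A. h p * (g p - g q)) = (\<Sum>(p, q)\<in>?A. (h p - h q) * (g p - g q))"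
  proof -
    have "2 * (\<Sum>(p, q)\<in>?A. h p * (g p - g q)) = (\<Sum>(p, q)\<in>?A. h p * (g p - g q)) + (\<Sum>(p, q)\<in>?A. h q * (g q - g p))"
      using S2 by simp
    also have "\<dots> = (\<Sum>(p, q)\<in>?A. h p * (g p - g q) + h q * (g q - g p))"
      by (simp add: sum.distrib[symmetric] case_prod_beta)
    also have "\<dots> = (\<Sum>(p, q)\<in>?A. (h p - h q) * (g p - g q))"
      by (rule sum.cong) (auto simp: algebra_simps)
    finally show ?thesis .
  qed
  have Aun: "?A = (\<Union>v\<in>ZO l. {(p, q). p \<in> tri v \<and> q \<in> tri v \<and> p \<noteq> q})"
    by (auto simp: Zadj_def)
  have "(\<Sum>(p, q)\<in>?A. (h p - h q) * (g p - g q)) =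
        (\<Sum>v\<in>ZO l. \<Sum>(p, q)\<in>{(p, q). p \<in> tri v \<and> q \<in> tri v \<and> p \<noteq> q}. (h p - h q) * (g p - g q))"
    unfolding Aun
  proof (rule sum.UNION_disjoint)
    show "finite (ZO l)" by (rule finite_ZO)
    show "\<forall>v\<in>ZO l. finite {(p, q). p \<in> tri v \<and> q \<in> tri v \<and> p \<noteq> q}"
      by (auto intro: finite_subset[of _ "tri _ \<times> tri _"] simp: finite_tri)
    show "\<forall>v\<in>ZO l. \<forall>w\<in>ZO l. v \<noteq> w \<longrightarrow>
      {(p, q). p \<in> tri v \<and> q \<in> tri v \<and> p \<noteq> q} \<inter> {(p, q). p \<in> tri w \<and> q \<in> tri w \<and> p \<noteq> q} = {}"
      using tri_uniq by blast
  qed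
  also have "\<dots> = 2 * ZB l g h"
    by (simp add: sum_pairs_tri ZB_def sum_distrib_left)
  finally show ?thesis using S1 S3 by simp
qed

lemma lap_sum_zero: "(\<Sum>p\<in>ZG l. ZLap l g p) = 0"
  using green[where h="\<lambda>_. 1" and l=l and g=g] by (simp add: ZB_def enb_def)

definition en :: "real \<Rightarrow> real \<Rightarrow> real \<Rightarrow> real" where
  "en a b c = (a - b)^2 + (b - c)^2 + (a - c)^2"

definition E6 :: "real \<Rightarrow> real \<Rightarrow> real \<Rightarrow> real \<Rightarrow> real \<Rightarrow> real \<Rightarrow> real" where
  "E6 a b c x y z = en a x y + en x b z + en y z c"

lemma id1:
  fixes a b c x y z :: real
  defines "g1 \<equiv> x - (2*a + 2*b + c)/5" and "g2 \<equiv> y - (2*a + b + 2*c)/5" and "g3 \<equiv> z - (a + 2*b + 2*c)/5"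
  shows "E6 a b c x y z = 3/5 * en a b c + (4*(g1^2 + g2^2 + g3^2) - 2*(g1*g2 + g1*g3 + g2*g3))"
  unfolding E6_def en_def g1_def g2_def g3_def by (simp add: field_simps power2_eq_square)

lemma id2:
  fixes a b c :: real
  shows "((2*a + 2*b + c)/5)^2 + ((2*a + b + 2*c)/5)^2 + ((a + 2*b + 2*c)/5)^2 = a^2 + b^2 + c^2 - 8/25 * en a b c"
  unfolding en_def by (simp add: field_simps power2_eq_square)

lemma split_sq:
  fixes h g t :: real
  assumes "t > 0"
  shows "(h + g)^2 \<le> (1 + t) * h^2 + (1 + t) / t * g^2"
proof -
  have "t * ((1 + t) * h^2 + (1 + t) / t * g^2 - (h + g)^2) = (t*h - g)^2"
    using assms by (simp add: field_simps power2_eq_square)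
  hence "t * ((1 + t) * h^2 + (1 + t) / t * g^2 - (h + g)^2) \<ge> 0" by simp
  thus ?thesis using assms by (simp add: zero_le_mult_iff)
qed

lemma E6_ge: "E6 a b c x y z \<ge> 3/5 * en a b c"
proof -
  define g1 where "g1 = x - (2*a + 2*b + c)/5"
  define g2 where "g2 = y - (2*a + b + 2*c)/5"
  define g3 where "g3 = z - (a + 2*b + 2*c)/5"
  have "4*(g1^2 + g2^2 + g3^2) - 2*(g1*g2 + g1*g3 + g2*g3) = 2*(g1^2+g2^2+g3^2) + ((g1-g2)^2 + (g1-g3)^2 + (g2-g3)^2)"
    by (simp add: power2_eq_square algebra_simps)
  also have "\<dots> \<ge> 0" by simp
  finally show ?thesis using id1[of a b c x y z] unfolding g1_def g2_def g3_def by linarith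
qed

lemma LI:
  fixes a b c x y z t :: real
  assumes t: "t > 0"
  shows "x^2 + y^2 + z^2 \<le> (1 + t) * (a^2 + b^2 + c^2 - 8/25 * en a b c)
                            + (1 + t) / (2 * t) * (E6 a b c x y z - 3/5 * en a b c)"
proof -
  define h1 where "h1 = (2*a + 2*b + c)/5"
  define h2 where "h2 = (2*a + b + 2*c)/5"
  define h3 where "h3 = (a + 2*b + 2*c)/5"
  define g1 where "g1 = x - h1"
  define g2 where "g2 = y - h2"
  define g3 where "g3 = z - h3"
  have E: "E6 a b c x y z - 3/5 * en a b c = 4*(g1^2 + g2^2 + g3^2) - 2*(g1*g2 + g1*g3 + g2*g3)"
    using id1[of a b c x y z] unfolding g1_def g2_def g3_def h1_def h2_def h3_def by simp
  have D: "4*(g1^2 + g2^2 + g3^2) - 2*(g1*g2 + g1*g3 + g2*g3) \<ge> 2*(g1^2+g2^2+g3^2)"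
  proof -
    have "4*(g1^2 + g2^2 + g3^2) - 2*(g1*g2 + g1*g3 + g2*g3) = 2*(g1^2+g2^2+g3^2) + ((g1-g2)^2 + (g1-g3)^2 + (g2-g3)^2)"
      by (simp add: power2_eq_square algebra_simps)
    thus ?thesis by simp
  qed
  have H: "h1^2 + h2^2 + h3^2 = a^2 + b^2 + c^2 - 8/25 * en a b c"
    unfolding h1_def h2_def h3_def by (rule id2)
  have x: "x^2 \<le> (1 + t) * h1^2 + (1 + t) / t * g1^2" using split_sq[OF t, of h1 g1] by (simp add: g1_def)
  have y: "y^2 \<le> (1 + t) * h2^2 + (1 + t) / t * g2^2" using split_sq[OF t, of h2 g2] by (simp add: g2_def)
  have z: "z^2 \<le> (1 + t) * h3^2 + (1 + t) / t * g3^2" using split_sq[OF t, of h3 g3] by (simp add: g3_def)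
  have "x^2 + y^2 + z^2 \<le> (1 + t) * (h1^2 + h2^2 + h3^2) + (1 + t) / t * (g1^2 + g2^2 + g3^2)"
    using x y z by (simp add: algebra_simps)
  also have "(1 + t) / t * (g1^2 + g2^2 + g3^2) \<le> (1 + t) / (2 * t) * (E6 a b c x y z - 3/5 * en a b c)"
  proof -
    have "(1 + t) / t * (g1^2 + g2^2 + g3^2) = (1 + t) / (2 * t) * (2 * (g1^2 + g2^2 + g3^2))"
      using t by (simp add: field_simps)
    also have "\<dots> \<le> (1 + t) / (2 * t) * (E6 a b c x y z - 3/5 * en a b c)"
      using D E t by (intro mult_left_mono) auto
    finally show ?thesis .
  qed
  finally show ?thesis using H by simp
qed

definition ZE :: "nat \<Rightarrow> (int \<times> int \<Rightarrow> real) \<Rightarrow> real" where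
  "ZE l g = ZB l g g"

lemma ZE_def2: "ZE l g = (\<Sum>v\<in>ZO l. en (g v) (g (fst v + 1, snd v)) (g (fst v, snd v + 1)))"
  by (simp add: ZE_def ZB_def enb_def en_def power2_eq_square)

definition mids :: "int \<times> int \<Rightarrow> (int \<times> int) set" where
  "mids v = {(2 * fst v + 1, 2 * snd v), (2 * fst v, 2 * snd v + 1), (2 * fst v + 1, 2 * snd v + 1)}"

lemma sub3_div: "w \<in> sub3 v \<Longrightarrow> (fst w div 2, snd w div 2) = v"
  by (auto simp: sub3_def dbl_def)

lemma mids_div: "w \<in> mids v \<Longrightarrow> (fst w div 2, snd w div 2) = v"
  by (auto simp: mids_def)

lemma sum_sub3:
  "(\<Sum>w\<in>sub3 v. F w) = F (dbl v) + F (2 * fst v + 1, 2 * snd v) + F (2 * fst v, 2 * snd v + 1)"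
proof -
  have d: "dbl v \<noteq> (2 * fst v + 1, 2 * snd v)" "dbl v \<noteq> (2 * fst v, 2 * snd v + 1)"
      "(2 * fst v + 1, 2 * snd v) \<noteq> (2 * fst v, 2 * snd v + 1)"
    by (auto simp: dbl_def prod_eq_iff)
  show ?thesis unfolding sub3_def using d by (simp add: add.assoc)
qed

lemma sum_mids:
  "(\<Sum>w\<in>mids v. F w) = F (2 * fst v + 1, 2 * snd v) + F (2 * fst v, 2 * snd v + 1) + F (2 * fst v + 1, 2 * snd v + 1)"
proof -
  have d: "(2 * fst v + 1, 2 * snd v) \<noteq> (2 * fst v, 2 * snd v + 1)"
      "(2 * fst v + 1, 2 * snd v) \<noteq> (2 * fst v + 1, 2 * snd v + 1)"
      "(2 * fst v, 2 * snd v + 1) \<noteq> (2 * fst v + 1, 2 * snd v + 1)"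
    by (auto simp: prod_eq_iff)
  show ?thesis unfolding mids_def using d by (simp add: add.assoc)
qed

lemma ZE_Suc:
  "ZE (Suc l) f = (\<Sum>v\<in>ZO l. E6 (f (dbl v)) (f (2 * fst v + 2, 2 * snd v)) (f (2 * fst v, 2 * snd v + 2))
       (f (2 * fst v + 1, 2 * snd v)) (f (2 * fst v, 2 * snd v + 1)) (f (2 * fst v + 1, 2 * snd v + 1)))"
proof -
  have "ZE (Suc l) f = (\<Sum>v\<in>ZO l. \<Sum>w\<in>sub3 v. en (f w) (f (fst w + 1, snd w)) (f (fst w, snd w + 1)))"
    unfolding ZE_def2 ZO_Suc_sub
  proof (rule sum.UNION_disjoint)
    show "finite (ZO l)" by (rule finite_ZO)
    show "\<forall>v\<in>ZO l. finite (sub3 v)" by (simp add: sub3_def)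
    show "\<forall>v\<in>ZO l. \<forall>w\<in>ZO l. v \<noteq> w \<longrightarrow> sub3 v \<inter> sub3 w = {}"
      using sub3_div by blast
  qed
  also have "\<dots> = (\<Sum>v\<in>ZO l. E6 (f (dbl v)) (f (2 * fst v + 2, 2 * snd v)) (f (2 * fst v, 2 * snd v + 2))
       (f (2 * fst v + 1, 2 * snd v)) (f (2 * fst v, 2 * snd v + 1)) (f (2 * fst v + 1, 2 * snd v + 1)))"
    by (rule sum.cong[OF refl]) (simp add: sum_sub3 E6_def dbl_def add.assoc)
  finally show ?thesis .
qed

lemma ZG_Suc: "ZG (Suc l) = dbl ` ZG l \<union> (\<Union>v\<in>ZO l. mids v)"
proof -
  have "ZG (Suc l) = (\<Union>w\<in>(\<Union>v\<in>ZO l. sub3 v). tri w)"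
    by (simp only: ZG_def ZO_Suc_sub)
  also have "\<dots> = (\<Union>v\<in>ZO l. \<Union>w\<in>sub3 v. tri w)"
    by blast
  also have "\<dots> = (\<Union>v\<in>ZO l. dbl ` tri v \<union> mids v)"
    by (rule SUP_cong[OF refl]) (auto simp: sub3_def tri_def dbl_def mids_def)
  also have "\<dots> = dbl ` ZG l \<union> (\<Union>v\<in>ZO l. mids v)"
    by (auto simp: ZG_def)
  finally show ?thesis .
qed

lemma inj_dbl: "inj dbl"
  by (auto simp: inj_def dbl_def prod_eq_iff)

lemma sum_ZG_Suc:
  "(\<Sum>p\<in>ZG (Suc l). F p) = (\<Sum>p\<in>ZG l. F (dbl p)) +
     (\<Sum>v\<in>ZO l. F (2 * fst v + 1, 2 * snd v) + F (2 * fst v, 2 * snd v + 1) + F (2 * fst v + 1, 2 * snd v + 1))"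
proof -
  have disj: "dbl ` ZG l \<inter> (\<Union>v\<in>ZO l. mids v) = {}"
    by (auto simp: dbl_def mids_def; presburger)
  have fin2: "finite (\<Union>v\<in>ZO l. mids v)" by (simp add: finite_ZO mids_def)
  have "(\<Sum>p\<in>ZG (Suc l). F p) = (\<Sum>p\<in>dbl ` ZG l. F p) + (\<Sum>p\<in>(\<Union>v\<in>ZO l. mids v). F p)"
    unfolding ZG_Suc by (rule sum.union_disjoint) (auto simp: finite_ZG fin2 disj)
  also have "(\<Sum>p\<in>dbl ` ZG l. F p) = (\<Sum>p\<in>ZG l. F (dbl p))"
    by (rule sum.reindex[OF inj_on_subset[OF inj_dbl], simplified])
  also have "(\<Sum>p\<in>(\<Union>v\<in>ZO l. mids v). F p) = (\<Sum>v\<in>ZO l. \<Sum>p\<in>mids v. F p)"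
  proof (rule sum.UNION_disjoint)
    show "finite (ZO l)" by (rule finite_ZO)
    show "\<forall>v\<in>ZO l. finite (mids v)" by (simp add: mids_def)
    show "\<forall>v\<in>ZO l. \<forall>w\<in>ZO l. v \<noteq> w \<longrightarrow> mids v \<inter> mids w = {}"
      using mids_div by blast
  qed
  finally show ?thesis by (simp add: sum_mids)
qed

lemma tri_sub_ZG: "v \<in> ZO l \<Longrightarrow> tri v \<subseteq> ZG l"
  by (auto simp: ZG_def)

lemma count_bound:
  fixes u :: "int \<times> int \<Rightarrow> real"
  shows
  "(\<Sum>v\<in>ZO l. (u v)^2 + (u (fst v + 1, snd v))^2 + (u (fst v, snd v + 1))^2) \<le> 2 * (\<Sum>p\<in>ZG l. (u p)^2)"
proof -
  have "(\<Sum>v\<in>ZO l. (u v)^2 + (u (fst v + 1, snd v))^2 + (u (fst v, snd v + 1))^2)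
      = (\<Sum>v\<in>ZO l. \<Sum>p\<in>{p. p \<in> ZG l \<and> p \<in> tri v}. (u p)^2)"
  proof (rule sum.cong[OF refl])
    fix v assume "v \<in> ZO l"
    hence "{p. p \<in> ZG l \<and> p \<in> tri v} = tri v" using tri_sub_ZG by blast
    thus "(u v)^2 + (u (fst v + 1, snd v))^2 + (u (fst v, snd v + 1))^2 = (\<Sum>p\<in>{p. p \<in> ZG l \<and> p \<in> tri v}. (u p)^2)"
      by (simp add: sum_tri3)
  qed
  also have "\<dots> = (\<Sum>p\<in>ZG l. \<Sum>v\<in>{v. v \<in> ZO l \<and> p \<in> tri v}. (u p)^2)"
    by (rule sum.swap_restrict) (auto simp: finite_ZO finite_ZG)
  also have "\<dots> = (\<Sum>p\<in>ZG l. real (card {v\<in>ZO l. p \<in> tri v}) * (u p)^2)"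
    by simp
  also have "\<dots> \<le> (\<Sum>p\<in>ZG l. 2 * (u p)^2)"
  proof (rule sum_mono)
    fix p
    have "real (card {v\<in>ZO l. p \<in> tri v}) \<le> 2" using cnt_le2[of l p] by simp
    thus "real (card {v\<in>ZO l. p \<in> tri v}) * (u p)^2 \<le> 2 * (u p)^2"
      by (intro mult_right_mono) auto
  qed
  finally show ?thesis by (simp add: sum_distrib_left)
qed

lemma final_arith:
  fixes lam A M S e Ef :: real
  assumes lam: "0 < lam" "lam \<le> 3/2"
    and hM: "M \<le> (1 + lam/8) * (S - 8/25 * e) + (1 + lam/8) / (2 * (lam/8)) * (Ef - 3/5 * e)"
    and hS: "S \<le> 2 * A" and he: "lam * A \<le> e" and hE: "3/5 * e \<le> Ef" and hA: "0 \<le> A"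
  shows "lam / 5 * (A + M) \<le> Ef"
proof -
  have eq: "lam/5 * ((1 + lam/8) * (S - 8/25 * e) + (1 + lam/8) / (2 * (lam/8)) * (Ef - 3/5 * e))
      = lam/5 * (1 + lam/8) * S - lam/5 * (1 + lam/8) * (8/25) * e + (4/5 + lam/10) * (Ef - 3/5 * e)"
    using lam by (simp add: field_simps)
  have h1: "lam/5 * M \<le> lam/5 * (1 + lam/8) * S - lam/5 * (1 + lam/8) * (8/25) * e + (4/5 + lam/10) * (Ef - 3/5 * e)"
  proof -
    have "lam/5 * M \<le> lam/5 * ((1 + lam/8) * (S - 8/25 * e) + (1 + lam/8) / (2 * (lam/8)) * (Ef - 3/5 * e))"
      using hM lam by (intro mult_left_mono) auto
    thus ?thesis using eq by linarith
  qed
  have h2: "lam/5 * (1 + lam/8) * S \<le> lam/5 * (1 + lam/8) * (2 * A)"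
    using mult_left_mono[OF hS, of "lam/5 * (1 + lam/8)"] lam by simp
  have h3: "(1/5 - lam/10) * (3/5 * e) \<le> (1/5 - lam/10) * Ef"
    using mult_left_mono[OF hE, of "1/5 - lam/10"] lam by simp
  define r where "r = 3/5 + lam/5 * (1 + lam/8) * (8/25)"
  have r0: "r \<ge> 0" using lam by (simp add: r_def)
  have h4: "r * (lam * A) \<le> r * e" using mult_left_mono[OF he r0] .
  have h5: "lam/5 * (3 + 2 * (lam/8)) \<le> r * lam"
  proof -
    have "r * lam - lam/5 * (3 + 2 * (lam/8)) = lam^2 * (7/500 + lam/125)"
      by (simp add: r_def field_simps power2_eq_square)
    also have "\<dots> \<ge> 0" using lam by simp
    finally show ?thesis by simp
  qed
  have h6: "lam/5 * (3 + 2 * (lam/8)) * A \<le> r * lam * A"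
    using mult_right_mono[OF h5 hA] .
  have "lam / 5 * (A + M) = lam/5 * A + lam/5 * M" by (simp add: algebra_simps)
  also have "\<dots> \<le> lam/5 * A + lam/5 * (1 + lam/8) * (2 * A) - lam/5 * (1 + lam/8) * (8/25) * e + (4/5 + lam/10) * (Ef - 3/5 * e)"
    using h1 h2 by linarith
  also have "\<dots> = lam/5 * (3 + 2 * (lam/8)) * A - (r - 3/5) * e + (4/5 + lam/10) * Ef - (4/5 + lam/10) * (3/5) * e"
    by (simp add: r_def algebra_simps)
  also have "\<dots> \<le> r * lam * A - (r - 3/5) * e + (4/5 + lam/10) * Ef - (4/5 + lam/10) * (3/5) * e"
    using h6 by linarith
  also have "\<dots> \<le> Ef"
  proof -
    have "r * lam * A = r * (lam * A)" by simp
    have "(1/5 - lam/10) * (3/5 * e) = 3/5 * e - (4/5 + lam/10) * (3/5) * e" by (simp add: algebra_simps)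
    moreover have "(1/5 - lam/10) * Ef = Ef - (4/5 + lam/10) * Ef" by (simp add: algebra_simps)
    ultimately show ?thesis using h3 h4 by (simp add: algebra_simps)
  qed
  finally show ?thesis .
qed

definition lamb :: "nat \<Rightarrow> real" where "lamb l = (15/2) / 5^l"

definition poinc :: "nat \<Rightarrow> bool" where
  "poinc l \<longleftrightarrow> (\<forall>g. (\<Sum>p\<in>ZG l. g p) = 0 \<longrightarrow> lamb l * (\<Sum>p\<in>ZG l. (g p)^2) \<le> ZE l g)"

lemma base_sos:
  fixes a b c x y z :: real
  shows "E6 a b c x y z - 3/2 * (a^2 + b^2 + c^2 + x^2 + y^2 + z^2) + 1/4 * (a + b + c + x + y + z)^2 =
    3/4 * (a - x - y + b/3 + z/3 + c/3)^2 + 2 * (x - 3/4 * y - 1/4 * b - 1/4 * z + 1/4 * c)^2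
    + 7/8 * (y + b/7 - z - c/7)^2 + 11/21 * (b - 35/22 * z + 13/22 * c)^2 + 15/44 * (z - c)^2"
  unfolding E6_def en_def by (simp add: field_simps power2_eq_square)

lemma ZG0: "ZG 0 = tri (0, 0)" by (simp add: ZG_def)

lemma sum_ZG1:
  fixes h :: "int \<times> int \<Rightarrow> real"
  shows "(\<Sum>p\<in>ZG 1. h p) = h (0, 0) + h (2, 0) + h (0, 2) + h (1, 0) + h (0, 1) + h (1, 1)"
  using sum_ZG_Suc[where F=h and l=0] by (simp add: ZG0 sum_tri3 dbl_def)

lemma ZE1: "ZE 1 g = E6 (g (0, 0)) (g (2, 0)) (g (0, 2)) (g (1, 0)) (g (0, 1)) (g (1, 1))"
  using ZE_Suc[of 0 g] by (simp add: dbl_def)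

lemma poinc1: "poinc 1"
  unfolding poinc_def
proof (intro allI impI)
  fix g :: "int \<times> int \<Rightarrow> real"
  assume s0: "(\<Sum>p\<in>ZG 1. g p) = 0"
  define a where "a = g (0, 0)"
  define b where "b = g (2, 0)"
  define c where "c = g (0, 2)"
  define x where "x = g (1, 0)"
  define y where "y = g (0, 1)"
  define z where "z = g (1, 1)"
  have s: "a + b + c + x + y + z = 0" using s0 unfolding sum_ZG1 by (simp add: a_def b_def c_def x_def y_def z_def)
  have "E6 a b c x y z - 3/2 * (a^2 + b^2 + c^2 + x^2 + y^2 + z^2) \<ge> 0"
    using base_sos[of a b c x y z] s by simp
  thus "lamb 1 * (\<Sum>p\<in>ZG 1. (g p)^2) \<le> ZE 1 g"
    unfolding sum_ZG1 ZE1 by (simp add: lamb_def a_def b_def c_def x_def y_def z_def)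
qed

lemma en_shift: "en (a - k) (b - k) (c - k) = en a b c"
  by (simp add: en_def)

lemma E6_shift: "E6 (a - k) (b - k) (c - k) (x - k) (y - k) (z - k) = E6 a b c x y z"
  by (simp add: E6_def en_def)

lemma poinc_step:
  assumes P: "poinc l" and l1: "l \<ge> 1"
  shows "poinc (Suc l)"
  unfolding poinc_def
proof (intro allI impI)
  fix f :: "int \<times> int \<Rightarrow> real"
  assume s0: "(\<Sum>p\<in>ZG (Suc l). f p) = 0"
  define lam where "lam = lamb l"
  have lam0: "0 < lam" by (simp add: lam_def lamb_def)
  have lam1: "lam \<le> 3/2"
  proof -
    have "(5::real) ^ 1 \<le> 5 ^ l" using l1 by (intro power_increasing) auto
    thus ?thesis by (simp add: lam_def lamb_def field_simps)
  qed
  define n where "n = card (ZG l)"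
  have n0: "n > 0" using finite_ZG ZG_ne by (simp add: n_def card_gt_0_iff)
  define c where "c = (\<Sum>p\<in>ZG l. f (dbl p)) / n"
  define u where "u = (\<lambda>p. f (dbl p) - c)"
  define F where "F = (\<lambda>p. f p - c)"
  have su: "(\<Sum>p\<in>ZG l. u p) = 0"
    using n0 by (simp add: u_def sum_subtractf c_def n_def)
  have Pu: "lam * (\<Sum>p\<in>ZG l. (u p)^2) \<le> ZE l u"
    using P su by (simp add: poinc_def lam_def)
  define A where "A = (\<Sum>p\<in>ZG l. (u p)^2)"
  define e where "e = ZE l u"
  define S where "S = (\<Sum>v\<in>ZO l. (u v)^2 + (u (fst v + 1, snd v))^2 + (u (fst v, snd v + 1))^2)"
  define M where "M = (\<Sum>v\<in>ZO l. (F (2 * fst v + 1, 2 * snd v))^2 + (F (2 * fst v, 2 * snd v + 1))^2 + (F (2 * fst v + 1, 2 * snd v + 1))^2)"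
  define Ef where "Ef = ZE (Suc l) f"
  define t where "t = lam / 8"
  have t0: "t > 0" using lam0 by (simp add: t_def)
  have corner1: "u (fst v + 1, snd v) = F (2 * fst v + 2, 2 * snd v)" for v
    by (simp add: u_def F_def dbl_def algebra_simps)
  have corner2: "u (fst v, snd v + 1) = F (2 * fst v, 2 * snd v + 2)" for v
    by (simp add: u_def F_def dbl_def algebra_simps)
  have corner0: "u v = F (dbl v)" for v by (simp add: u_def F_def)
  have Ef_eq: "Ef = (\<Sum>v\<in>ZO l. E6 (u v) (u (fst v + 1, snd v)) (u (fst v, snd v + 1))
       (F (2 * fst v + 1, 2 * snd v)) (F (2 * fst v, 2 * snd v + 1)) (F (2 * fst v + 1, 2 * snd v + 1)))"
    unfolding Ef_def ZE_Suc corner1 corner2 corner0 F_def E6_shift by (simp add: dbl_def algebra_simps)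
  have e_eq: "e = (\<Sum>v\<in>ZO l. en (u v) (u (fst v + 1, snd v)) (u (fst v, snd v + 1)))"
    by (simp add: e_def ZE_def2)
  have hM: "M \<le> (1 + t) * (S - 8/25 * e) + (1 + t) / (2 * t) * (Ef - 3/5 * e)"
  proof -
    have "M \<le> (\<Sum>v\<in>ZO l. (1 + t) * ((u v)^2 + (u (fst v + 1, snd v))^2 + (u (fst v, snd v + 1))^2
              - 8/25 * en (u v) (u (fst v + 1, snd v)) (u (fst v, snd v + 1)))
          + (1 + t) / (2 * t) * (E6 (u v) (u (fst v + 1, snd v)) (u (fst v, snd v + 1))
       (F (2 * fst v + 1, 2 * snd v)) (F (2 * fst v, 2 * snd v + 1)) (F (2 * fst v + 1, 2 * snd v + 1))
           - 3/5 * en (u v) (u (fst v + 1, snd v)) (u (fst v, snd v + 1))))"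
      unfolding M_def by (rule sum_mono) (rule LI[OF t0])
    also have "\<dots> = (1 + t) * (\<Sum>v\<in>ZO l. (u v)^2 + (u (fst v + 1, snd v))^2 + (u (fst v, snd v + 1))^2
              - 8/25 * en (u v) (u (fst v + 1, snd v)) (u (fst v, snd v + 1)))
          + (1 + t) / (2 * t) * (\<Sum>v\<in>ZO l. E6 (u v) (u (fst v + 1, snd v)) (u (fst v, snd v + 1))
       (F (2 * fst v + 1, 2 * snd v)) (F (2 * fst v, 2 * snd v + 1)) (F (2 * fst v + 1, 2 * snd v + 1))
           - 3/5 * en (u v) (u (fst v + 1, snd v)) (u (fst v, snd v + 1)))"
      by (simp only: sum.distrib sum_distrib_left)
    also have "\<dots> = (1 + t) * (S - 8/25 * e) + (1 + t) / (2 * t) * (Ef - 3/5 * e)"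
      by (simp only: S_def e_eq Ef_eq sum_subtractf sum_distrib_left)
    finally show ?thesis .
  qed
  have hS: "S \<le> 2 * A" unfolding S_def A_def by (rule count_bound)
  have he: "lam * A \<le> e" using Pu by (simp add: A_def e_def)
  have hE: "3/5 * e \<le> Ef"
  proof -
    have "3/5 * e = (\<Sum>v\<in>ZO l. 3/5 * en (u v) (u (fst v + 1, snd v)) (u (fst v, snd v + 1)))"
      by (simp add: e_eq sum_distrib_left)
    also have "\<dots> \<le> Ef" unfolding Ef_eq by (rule sum_mono) (rule E6_ge)
    finally show ?thesis .
  qed
  have hA: "0 \<le> A" by (simp add: A_def sum_nonneg)
  have key: "lam / 5 * (A + M) \<le> Ef"
    using final_arith[OF lam0 lam1 _ hS he hE hA] hM by (simp add: t_def)
  have FF: "(\<Sum>p\<in>ZG (Suc l). (F p)^2) = A + M"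
    unfolding sum_ZG_Suc A_def M_def by (simp add: u_def F_def)
  have fF: "(\<Sum>p\<in>ZG (Suc l). (f p)^2) \<le> (\<Sum>p\<in>ZG (Suc l). (F p)^2)"
  proof -
    have "(\<Sum>p\<in>ZG (Suc l). (F p)^2) = (\<Sum>p\<in>ZG (Suc l). (f p)^2) - 2 * c * (\<Sum>p\<in>ZG (Suc l). f p) + real (card (ZG (Suc l))) * c^2"
      by (simp add: F_def power2_diff sum.distrib sum_subtractf sum_distrib_left sum_distrib_right algebra_simps)
    thus ?thesis using s0 by simp
  qed
  have ls: "lamb (Suc l) = lam / 5" by (simp add: lam_def lamb_def)
  have "lamb (Suc l) * (\<Sum>p\<in>ZG (Suc l). (f p)^2) \<le> lam / 5 * (A + M)"
    unfolding ls using fF FF lam0 by (intro mult_left_mono) auto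
  thus "lamb (Suc l) * (\<Sum>p\<in>ZG (Suc l). (f p)^2) \<le> ZE (Suc l) f"
    using key by (simp add: Ef_def)
qed

lemma poinc_all: "l \<ge> 1 \<Longrightarrow> poinc l"
proof (induction l rule: nat_induct_at_least)
  case base thus ?case by (rule poinc1)
next
  case (Suc n) thus ?case using poinc_step by blast
qed

fun hf :: "nat \<Rightarrow> int \<times> int \<Rightarrow> real" where
  "hf 0 = (\<lambda>p. if p = (0, 0) then 1 else if p = (1, 0) then -1 else 0)"
| "hf (Suc l) = (\<lambda>p. let i = fst p; j = snd p; a = i div 2; b = j div 2 in
     if even i \<and> even j then hf l (a, b)
     else if odd i \<and> even j then (2 * hf l (a, b) + 2 * hf l (a + 1, b) + hf l (a, b + 1)) / 5
     else if even i \<and> odd j then (2 * hf l (a, b) + hf l (a + 1, b) + 2 * hf l (a, b + 1)) / 5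
     else (hf l (a, b) + 2 * hf l (a + 1, b) + 2 * hf l (a, b + 1)) / 5)"

lemma div_facts: "(2 * i) div 2 = (i::int)" "(2 * i + 1) div 2 = i" "(2 * i + 2) div 2 = i + 1"
  by auto

lemma hf_Suc_vals:
  fixes i j :: int
  shows "hf (Suc l) (2 * i, 2 * j) = hf l (i, j)"
    and "hf (Suc l) (2 * i + 2, 2 * j) = hf l (i + 1, j)"
    and "hf (Suc l) (2 * i, 2 * j + 2) = hf l (i, j + 1)"
    and "hf (Suc l) (2 * i + 1, 2 * j) = (2 * hf l (i, j) + 2 * hf l (i + 1, j) + hf l (i, j + 1)) / 5"
    and "hf (Suc l) (2 * i, 2 * j + 1) = (2 * hf l (i, j) + hf l (i + 1, j) + 2 * hf l (i, j + 1)) / 5"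
    and "hf (Suc l) (2 * i + 1, 2 * j + 1) = (hf l (i, j) + 2 * hf l (i + 1, j) + 2 * hf l (i, j + 1)) / 5"
proof -
  have e1: "even (2 * i + 2)" "even (2 * j + 2)" by auto
  show "hf (Suc l) (2 * i, 2 * j) = hf l (i, j)" by simp
  show "hf (Suc l) (2 * i + 2, 2 * j) = hf l (i + 1, j)" using e1 by (simp add: Let_def div_facts)
  show "hf (Suc l) (2 * i, 2 * j + 2) = hf l (i, j + 1)" using e1 by (simp add: Let_def div_facts)
  show "hf (Suc l) (2 * i + 1, 2 * j) = (2 * hf l (i, j) + 2 * hf l (i + 1, j) + hf l (i, j + 1)) / 5"
    by (simp add: Let_def div_facts)
  show "hf (Suc l) (2 * i, 2 * j + 1) = (2 * hf l (i, j) + hf l (i + 1, j) + 2 * hf l (i, j + 1)) / 5"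
    by (simp add: Let_def div_facts)
  show "hf (Suc l) (2 * i + 1, 2 * j + 1) = (hf l (i, j) + 2 * hf l (i + 1, j) + 2 * hf l (i, j + 1)) / 5"
    by (simp add: Let_def div_facts)
qed

lemma sum_ZO_Suc:
  "(\<Sum>w\<in>ZO (Suc l). P w) = (\<Sum>v\<in>ZO l. P (dbl v) + P (2 * fst v + 1, 2 * snd v) + P (2 * fst v, 2 * snd v + 1))"
proof -
  have "(\<Sum>w\<in>ZO (Suc l). P w) = (\<Sum>v\<in>ZO l. \<Sum>w\<in>sub3 v. P w)"
    unfolding ZO_Suc_sub
  proof (rule sum.UNION_disjoint)
    show "finite (ZO l)" by (rule finite_ZO)
    show "\<forall>v\<in>ZO l. finite (sub3 v)" by (simp add: sub3_def)
    show "\<forall>v\<in>ZO l. \<forall>w\<in>ZO l. v \<noteq> w \<longrightarrow> sub3 v \<inter> sub3 w = {}"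
      using sub3_div by blast
  qed
  thus ?thesis by (simp add: sum_sub3)
qed

lemma harm_E6: "E6 a b c ((2*a + 2*b + c)/5) ((2*a + b + 2*c)/5) ((a + 2*b + 2*c)/5) = 3/5 * en a b c"
  using id1[of a b c "(2*a + 2*b + c)/5" "(2*a + b + 2*c)/5" "(a + 2*b + 2*c)/5"] by simp

lemma ZE_hf: "ZE l (hf l) = 6 * (3/5)^l"
proof (induction l)
  case 0
  show ?case by (simp add: ZE_def2 en_def)
next
  case (Suc l)
  have "ZE (Suc l) (hf (Suc l)) = (\<Sum>v\<in>ZO l. 3/5 * en (hf l v) (hf l (fst v + 1, snd v)) (hf l (fst v, snd v + 1)))"
    unfolding ZE_Suc by (rule sum.cong[OF refl]) (simp add: dbl_def hf_Suc_vals harm_E6 del: hf.simps)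
  also have "\<dots> = 3/5 * ZE l (hf l)" by (simp add: ZE_def2 sum_distrib_left)
  finally show ?case using Suc by simp
qed

lemma sum_ZO_Suc_tri:
  "(\<Sum>w\<in>ZO (Suc l). \<Psi> (h w) (h (fst w + 1, snd w)) (h (fst w, snd w + 1))) =
   (\<Sum>v\<in>ZO l. \<Psi> (h (2 * fst v, 2 * snd v)) (h (2 * fst v + 1, 2 * snd v)) (h (2 * fst v, 2 * snd v + 1))
     + \<Psi> (h (2 * fst v + 1, 2 * snd v)) (h (2 * fst v + 2, 2 * snd v)) (h (2 * fst v + 1, 2 * snd v + 1))
     + \<Psi> (h (2 * fst v, 2 * snd v + 1)) (h (2 * fst v + 1, 2 * snd v + 1)) (h (2 * fst v, 2 * snd v + 2)))"
  unfolding sum_ZO_Suc by (rule sum.cong[OF refl]) (simp add: dbl_def add.assoc)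

lemma hf_cong_helper:
  assumes "\<And>i j. Q (i, j) = R (i, j)"
  shows "Q v = R v"
  using assms[of "fst v" "snd v"] by simp

definition Wf :: "nat \<Rightarrow> real" where
  "Wf l = (\<Sum>v\<in>ZO l. (hf l v)^2 + (hf l (fst v + 1, snd v))^2 + (hf l (fst v, snd v + 1))^2)"

definition Tf :: "nat \<Rightarrow> real" where
  "Tf l = (\<Sum>v\<in>ZO l. hf l v + hf l (fst v + 1, snd v) + hf l (fst v, snd v + 1))"

lemma Tf_zero: "Tf l = 0"
proof (induction l)
  case 0 show ?case by (simp add: Tf_def)
next
  case (Suc l)
  have "Tf (Suc l) = (\<Sum>v\<in>ZO l. 3 * (hf l v + hf l (fst v + 1, snd v) + hf l (fst v, snd v + 1)))"
    unfolding Tf_def sum_ZO_Suc_tri[where \<Psi>="\<lambda>a b c. a + b + c"]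
    by (rule sum.cong[OF refl]) (simp only: hf_Suc_vals, simp add: field_simps)
  also have "\<dots> = 3 * Tf l" by (simp add: Tf_def sum_distrib_left)
  finally show ?case using Suc by simp
qed

lemma Wf_rec: "Wf (Suc l) = 3 * Wf l - 16/25 * ZE l (hf l)"
proof -
  have "Wf (Suc l) = (\<Sum>v\<in>ZO l. 3 * ((hf l v)^2 + (hf l (fst v + 1, snd v))^2 + (hf l (fst v, snd v + 1))^2)
        - 16/25 * en (hf l v) (hf l (fst v + 1, snd v)) (hf l (fst v, snd v + 1)))"
    unfolding Wf_def sum_ZO_Suc_tri[where \<Psi>="\<lambda>a b c. a^2 + b^2 + c^2"]
    by (rule sum.cong[OF refl]) (simp only: hf_Suc_vals, simp add: en_def field_simps power2_eq_square)
  also have "\<dots> = 3 * Wf l - 16/25 * ZE l (hf l)"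
    by (simp add: Wf_def ZE_def2 sum_subtractf sum_distrib_left)
  finally show ?thesis .
qed

lemma Wf_closed: "Wf l = 3^l * (2/5 + 8/5 / 5^l)"
proof (induction l)
  case 0 show ?case by (simp add: Wf_def)
next
  case (Suc l)
  show ?case unfolding Wf_rec Suc ZE_hf by (simp add: field_simps power_divide)
qed

lemma var_hf:
  "(\<Sum>p\<in>ZG l. (hf l p - c)^2) \<ge> 3^l / 5"
proof -
  have "(\<Sum>v\<in>ZO l. (hf l v - c)^2 + (hf l (fst v + 1, snd v) - c)^2 + (hf l (fst v, snd v + 1) - c)^2)
      = Wf l - 2 * c * Tf l + 3 * c^2 * real (card (ZO l))"
    by (simp add: Wf_def Tf_def power2_diff sum.distrib sum_subtractf sum_distrib_left algebra_simps)
  also have "\<dots> \<ge> Wf l" using Tf_zero by simp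
  finally have "Wf l \<le> (\<Sum>v\<in>ZO l. (hf l v - c)^2 + (hf l (fst v + 1, snd v) - c)^2 + (hf l (fst v, snd v + 1) - c)^2)" .
  also have "\<dots> \<le> 2 * (\<Sum>p\<in>ZG l. (hf l p - c)^2)"
    using count_bound[where l=l and u="\<lambda>p. hf l p - c"] by simp
  finally have "Wf l \<le> 2 * (\<Sum>p\<in>ZG l. (hf l p - c)^2)" .
  moreover have "Wf l \<ge> 2/5 * 3^l" unfolding Wf_closed by (simp add: field_simps)
  ultimately show ?thesis by simp
qed

definition eigset :: "nat \<Rightarrow> real set" where
  "eigset l = {mu. \<exists>g. (\<exists>p\<in>ZG l. g p \<noteq> 0) \<and> (\<forall>p\<in>ZG l. ZLap l g p = mu * g p)}"

lemma ZE_ZB: "ZE l g = (\<Sum>p\<in>ZG l. g p * ZLap l g p)"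
  by (simp add: green ZE_def)

lemma ZE_nonneg: "ZE l g \<ge> 0"
  by (simp add: ZE_def2 en_def sum_nonneg)

lemma eig_lower:
  assumes mu: "mu \<in> eigset l" and nz: "mu \<noteq> 0" and l1: "l \<ge> 1"
  shows "lamb l \<le> mu"
proof -
  obtain g where g1: "\<exists>p\<in>ZG l. g p \<noteq> 0" and g2: "\<forall>p\<in>ZG l. ZLap l g p = mu * g p"
    using mu by (auto simp: eigset_def)
  have "mu * (\<Sum>p\<in>ZG l. g p) = (\<Sum>p\<in>ZG l. ZLap l g p)"
    using g2 by (simp add: sum_distrib_left)
  also have "\<dots> = 0" by (rule lap_sum_zero)
  finally have s0: "(\<Sum>p\<in>ZG l. g p) = 0" using nz by simp
  have "ZE l g = (\<Sum>p\<in>ZG l. g p * (mu * g p))"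
    unfolding ZE_ZB using g2 by (intro sum.cong) auto
  also have "\<dots> = mu * (\<Sum>p\<in>ZG l. (g p)^2)"
    by (simp add: sum_distrib_left power2_eq_square mult.left_commute)
  finally have E: "ZE l g = mu * (\<Sum>p\<in>ZG l. (g p)^2)" .
  have pos: "(\<Sum>p\<in>ZG l. (g p)^2) > 0"
  proof -
    obtain p where "p \<in> ZG l" "g p \<noteq> 0" using g1 by blast
    hence "(g p)^2 \<le> (\<Sum>p\<in>ZG l. (g p)^2)" and "(g p)^2 > 0"
      by (auto intro!: member_le_sum simp: finite_ZG)
    thus ?thesis by linarith
  qed
  have "lamb l * (\<Sum>p\<in>ZG l. (g p)^2) \<le> mu * (\<Sum>p\<in>ZG l. (g p)^2)"
    using poinc_all[OF l1] s0 E unfolding poinc_def by metis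
  thus ?thesis using pos by simp
qed

lemma quad_zero:
  fixes a b :: real
  assumes h: "\<And>s. 0 \<le> s * a + s^2 * b"
  shows "a = 0"
proof (rule ccontr)
  assume a: "a \<noteq> 0"
  define k where "k = \<bar>b\<bar> + 1"
  have k: "k \<ge> 1" by (simp add: k_def)
  define s where "s = - a / (2 * k)"
  have "s^2 * b \<le> s^2 * \<bar>b\<bar>" by (intro mult_left_mono) auto
  also have "\<dots> \<le> s^2 * k" by (intro mult_left_mono) (auto simp: k_def)
  also have "s^2 * k = a^2 / (4 * k)" using k by (simp add: s_def power2_eq_square field_simps)
  finally have 1: "s^2 * b \<le> a^2 / (4 * k)" .
  have 2: "s * a = - (a^2 / (2 * k))" using k by (simp add: s_def power2_eq_square field_simps)
  have 3: "a^2 / (4 * k) > 0" using a k by simp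
  have 4: "- (a^2 / (2 * k)) + a^2 / (4 * k) = - (a^2 / (4 * k))" using k by (simp add: field_simps)
  have "s * a + s^2 * b \<le> - (a^2 / (2 * k)) + a^2 / (4 * k)" using 1 2 by linarith
  hence "s * a + s^2 * b < 0" using 3 4 by linarith
  thus False using h[of s] by simp
qed

definition box :: "nat \<Rightarrow> (int \<times> int \<Rightarrow> real) set" where
  "box l = PiE UNIV (\<lambda>p. if p \<in> ZG l then {-1..1} else {0})"

definition Kset :: "nat \<Rightarrow> (int \<times> int \<Rightarrow> real) set" where
  "Kset l = box l \<inter> {g. (\<Sum>p\<in>ZG l. g p) = 0} \<inter> {g. (\<Sum>p\<in>ZG l. (g p)^2) = 1}"

lemma compact_box: "compact (box l)"
proof -
  have "compactin (product_topology (\<lambda>_. euclidean) UNIV) (PiE UNIV (\<lambda>p. if p \<in> ZG l then {-1..1::real} else {0}))"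
    by (subst compactin_PiE) auto
  thus ?thesis by (simp add: euclidean_product_topology box_def)
qed

lemma cont_sum: "continuous_on UNIV (\<lambda>g::int \<times> int \<Rightarrow> real. \<Sum>p\<in>A. g p)"
  by (intro continuous_on_sum) simp

lemma cont_sum2: "continuous_on UNIV (\<lambda>g::int \<times> int \<Rightarrow> real. \<Sum>p\<in>A. (g p)^2)"
  by (intro continuous_on_sum continuous_intros) simp

lemma compact_K: "compact (Kset l)"
proof -
  have c1: "closed {g::int \<times> int \<Rightarrow> real. (\<Sum>p\<in>ZG l. g p) = 0}"
    by (rule closed_Collect_eq[OF cont_sum continuous_on_const])
  have c2: "closed {g::int \<times> int \<Rightarrow> real. (\<Sum>p\<in>ZG l. (g p)^2) = 1}"
    by (rule closed_Collect_eq[OF cont_sum2 continuous_on_const])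
  show ?thesis unfolding Kset_def
    using compact_box c1 c2 by (intro compact_Int_closed) auto
qed

lemma ZE_fun: "ZE l = (\<lambda>g. \<Sum>v\<in>ZO l. (g v - g (fst v + 1, snd v))^2 + (g (fst v + 1, snd v) - g (fst v, snd v + 1))^2
     + (g v - g (fst v, snd v + 1))^2)"
  by (rule ext) (simp add: ZE_def2 en_def)

lemma coord_cont: "continuous_on S (\<lambda>x::int \<times> int \<Rightarrow> real. x i)"
  by (rule continuous_on_subset[OF continuous_on_product_coordinates]) auto

lemma cont_ZE: "continuous_on S (ZE l)"
  unfolding ZE_fun by (intro continuous_on_sum continuous_intros coord_cont)

lemma ZE_scale: "ZE l (\<lambda>p. a * g p) = a^2 * ZE l g"
  by (simp add: ZE_def2 en_def sum_distrib_left power2_eq_square algebra_simps)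

lemma ZE_shift: "ZE l (\<lambda>p. g p - c) = ZE l g"
  by (simp add: ZE_def2 en_def)

lemma ZE_cong: "(\<And>p. p \<in> ZG l \<Longrightarrow> g p = g' p) \<Longrightarrow> ZE l g = ZE l g'"
  unfolding ZE_def2
proof (rule sum.cong[OF refl])
  fix v assume "v \<in> ZO l" and h: "\<And>p. p \<in> ZG l \<Longrightarrow> g p = g' p"
  hence "v \<in> ZG l" "(fst v + 1, snd v) \<in> ZG l" "(fst v, snd v + 1) \<in> ZG l"
    using tri_sub_ZG[of v l] by (auto simp: tri_def)
  thus "en (g v) (g (fst v + 1, snd v)) (g (fst v, snd v + 1)) = en (g' v) (g' (fst v + 1, snd v)) (g' (fst v, snd v + 1))"
    using h by simp
qed

lemma ZE_add: "ZE l (\<lambda>p. g p + s * h p) = ZE l g + 2 * s * ZB l g h + s^2 * ZE l h"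
proof -
  have "ZE l (\<lambda>p. g p + s * h p) = (\<Sum>v\<in>ZO l. en (g v) (g (fst v + 1, snd v)) (g (fst v, snd v + 1))
       + 2 * s * enb (g v) (g (fst v + 1, snd v)) (g (fst v, snd v + 1)) (h v) (h (fst v + 1, snd v)) (h (fst v, snd v + 1))
       + s^2 * en (h v) (h (fst v + 1, snd v)) (h (fst v, snd v + 1)))"
    unfolding ZE_def2 by (rule sum.cong[OF refl]) (simp add: en_def enb_def power2_eq_square algebra_simps)
  thus ?thesis by (simp add: ZE_def2 ZB_def sum.distrib sum_distrib_left)
qed

lemma sq_le_sum: fixes g :: "int \<times> int \<Rightarrow> real" shows "p \<in> ZG l \<Longrightarrow> (g p)^2 \<le> (\<Sum>q\<in>ZG l. (g q)^2)"
  using member_le_sum[of p "ZG l" "\<lambda>q. (g q)^2"] by (simp add: finite_ZG)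

lemma in_box: "(\<forall>p. p \<notin> ZG l \<longrightarrow> g p = 0) \<Longrightarrow> (\<forall>p\<in>ZG l. (g p)^2 \<le> 1) \<Longrightarrow> g \<in> box l"
  by (auto simp: box_def PiE_iff abs_square_le_1 abs_le_iff)

lemma box_zero: assumes "g \<in> box l" "p \<notin> ZG l" shows "g p = 0"
proof -
  have "g p \<in> (if p \<in> ZG l then {-1..1} else {0})" using assms(1) unfolding box_def PiE_iff by blast
  thus ?thesis using assms(2) by simp
qed

lemma normalize_in_K:
  fixes phi :: "int \<times> int \<Rightarrow> real"
  assumes z: "\<forall>p. p \<notin> ZG l \<longrightarrow> phi p = 0" and s: "(\<Sum>p\<in>ZG l. phi p) = 0"
    and pos: "(\<Sum>p\<in>ZG l. (phi p)^2) > 0"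
  shows "(\<lambda>p. phi p / sqrt (\<Sum>q\<in>ZG l. (phi q)^2)) \<in> Kset l"
proof -
  define Q where "Q = (\<Sum>q\<in>ZG l. (phi q)^2)"
  have sq: "(sqrt Q)^2 = Q" using pos by (simp add: Q_def)
  have bx: "(\<lambda>p. phi p / sqrt Q) \<in> box l"
  proof (rule in_box)
    show "\<forall>p. p \<notin> ZG l \<longrightarrow> phi p / sqrt Q = 0" using z by simp
    show "\<forall>p\<in>ZG l. (phi p / sqrt Q)^2 \<le> 1"
    proof
      fix p assume "p \<in> ZG l"
      hence "(phi p)^2 \<le> Q" unfolding Q_def by (rule sq_le_sum)
      thus "(phi p / sqrt Q)^2 \<le> 1" using pos by (simp add: power_divide sq Q_def)
    qed
  qed
  have s1: "(\<Sum>p\<in>ZG l. phi p / sqrt Q) = 0" using s by (simp add: sum_divide_distrib[symmetric])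
  have s2: "(\<Sum>p\<in>ZG l. (phi p / sqrt Q)^2) = 1"
    using pos by (simp add: power_divide sq sum_divide_distrib[symmetric] Q_def)
  show ?thesis using bx s1 s2 by (simp add: Kset_def Q_def)
qed

lemma exists_eig:
  assumes l1: "l \<ge> 1"
  shows "\<exists>m\<in>eigset l. lamb l \<le> m \<and> m \<le> 30 / 5^l"
proof -
  define N where "N = real (card (ZG l))"
  have Npos: "N > 0" using finite_ZG ZG_ne by (simp add: N_def card_gt_0_iff)
  define c where "c = (\<Sum>p\<in>ZG l. hf l p) / N"
  define h0 where "h0 = (\<lambda>p. if p \<in> ZG l then hf l p - c else 0)"
  have h0z: "\<forall>p. p \<notin> ZG l \<longrightarrow> h0 p = 0" by (simp add: h0_def)
  have h0s: "(\<Sum>p\<in>ZG l. h0 p) = 0"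
  proof -
    have "(\<Sum>p\<in>ZG l. h0 p) = (\<Sum>p\<in>ZG l. hf l p - c)" by (rule sum.cong) (auto simp: h0_def)
    also have "\<dots> = 0" using Npos by (simp add: sum_subtractf c_def N_def)
    finally show ?thesis .
  qed
  define N0 where "N0 = (\<Sum>p\<in>ZG l. (h0 p)^2)"
  have N0b: "N0 \<ge> 3^l / 5"
  proof -
    have "N0 = (\<Sum>p\<in>ZG l. (hf l p - c)^2)" unfolding N0_def by (rule sum.cong) (auto simp: h0_def)
    thus ?thesis using var_hf[of l c] by simp
  qed
  have N0pos: "N0 > 0" using N0b by (smt (verit) zero_less_power divide_pos_pos)
  have Eh0: "ZE l h0 = 6 * (3/5)^l"
  proof -
    have "ZE l h0 = ZE l (\<lambda>p. hf l p - c)" by (rule ZE_cong) (simp add: h0_def)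
    also have "\<dots> = ZE l (hf l)" by (rule ZE_shift)
    finally show ?thesis by (simp add: ZE_hf)
  qed
  have hnK: "(\<lambda>p. h0 p / sqrt N0) \<in> Kset l"
    unfolding N0_def by (rule normalize_in_K[OF h0z h0s]) (use N0pos in \<open>simp add: N0_def\<close>)
  hence Kne: "Kset l \<noteq> {}" by blast
  obtain g0 where g0K: "g0 \<in> Kset l" and g0min: "\<forall>y\<in>Kset l. ZE l g0 \<le> ZE l y"
    using continuous_attains_inf[OF compact_K Kne cont_ZE] by blast
  define m where "m = ZE l g0"
  have m0: "m \<ge> 0" by (simp add: m_def ZE_nonneg)
  have g0z: "\<forall>p. p \<notin> ZG l \<longrightarrow> g0 p = 0" using g0K box_zero by (auto simp: Kset_def)
  have g0s: "(\<Sum>p\<in>ZG l. g0 p) = 0" and g0n: "(\<Sum>p\<in>ZG l. (g0 p)^2) = 1"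
    using g0K by (auto simp: Kset_def)
  have ray: "m * (\<Sum>p\<in>ZG l. (phi p)^2) \<le> ZE l phi"
    if z: "\<forall>p. p \<notin> ZG l \<longrightarrow> phi p = 0" and s: "(\<Sum>p\<in>ZG l. phi p) = 0" for phi
  proof (cases "(\<Sum>p\<in>ZG l. (phi p)^2) = 0")
    case True thus ?thesis by (simp add: ZE_nonneg)
  next
    case False
    define Q where "Q = (\<Sum>p\<in>ZG l. (phi p)^2)"
    have Qpos: "Q > 0" using False sum_nonneg[of "ZG l" "\<lambda>p. (phi p)^2"] by (simp add: Q_def)
    have inK: "(\<lambda>p. phi p / sqrt Q) \<in> Kset l"
      unfolding Q_def by (rule normalize_in_K[OF z s]) (use Qpos in \<open>simp add: Q_def\<close>)
    have "m \<le> ZE l (\<lambda>p. phi p / sqrt Q)" using g0min inK by (simp add: m_def)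
    also have "(\<lambda>p. phi p / sqrt Q) = (\<lambda>p. (1 / sqrt Q) * phi p)" by auto
    also have "ZE l (\<lambda>p. (1 / sqrt Q) * phi p) = (1 / sqrt Q)^2 * ZE l phi" by (rule ZE_scale)
    also have "\<dots> = ZE l phi / Q" using Qpos by (simp add: power_divide)
    finally have "m \<le> ZE l phi / Q" .
    thus ?thesis using Qpos by (simp add: Q_def field_simps)
  qed
  have upper: "m \<le> 30 / 5^l"
  proof -
    have "m * N0 \<le> 6 * (3/5)^l" using ray[OF h0z h0s] Eh0 by (simp add: N0_def)
    moreover have "m * (3^l / 5) \<le> m * N0" using m0 N0b by (intro mult_left_mono)
    ultimately have "m * (3^l / 5) \<le> 6 * (3^l / 5^l)" by (simp add: power_divide)
    hence "m * 3^l \<le> 30 * 3^l / 5^l" by (simp add: field_simps)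
    hence "m * 3^l \<le> (30 / 5^l) * 3^l" by (simp add: mult.commute mult.left_commute)
    moreover have p: "(3::real)^l > 0" by simp
    ultimately show ?thesis by (simp only: mult_le_cancel_right_pos)
  qed
  have lower: "lamb l \<le> m"
    using poinc_all[OF l1] g0s g0n unfolding poinc_def m_def by (metis mult.right_neutral)
  define r where "r = (\<lambda>p. ZLap l g0 p - m * g0 p)"
  have rxy: "r x = r y" if x: "x \<in> ZG l" and y: "y \<in> ZG l" for x y
  proof -
    define phi where "phi = (\<lambda>p. (if p = x then 1 else 0) - (if p = y then 1 else (0::real)))"
    have delta: "(\<Sum>p\<in>ZG l. (if p = q then 1 else 0) * F p) = F q" if "q \<in> ZG l" for q and F :: "int \<times> int \<Rightarrow> real"
      using that by (simp add: if_distrib[of "\<lambda>a. a * _"] finite_ZG cong: if_cong)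
    have pz: "\<forall>p. p \<notin> ZG l \<longrightarrow> phi p = 0" using x y by (auto simp: phi_def)
    have ps: "(\<Sum>p\<in>ZG l. phi p) = 0"
      using delta[OF x, of "\<lambda>_. 1"] delta[OF y, of "\<lambda>_. 1"] by (simp add: phi_def sum_subtractf)
    have B: "ZB l g0 phi = ZLap l g0 x - ZLap l g0 y"
    proof -
      have "ZB l g0 phi = (\<Sum>p\<in>ZG l. phi p * ZLap l g0 p)" by (simp add: green)
      also have "\<dots> = (\<Sum>p\<in>ZG l. (if p = x then 1 else 0) * ZLap l g0 p) - (\<Sum>p\<in>ZG l. (if p = y then 1 else 0) * ZLap l g0 p)"
        by (simp add: phi_def left_diff_distrib sum_subtractf)
      also have "\<dots> = ZLap l g0 x - ZLap l g0 y" using delta[OF x] delta[OF y] by simp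
      finally show ?thesis .
    qed
    have X: "(\<Sum>p\<in>ZG l. g0 p * phi p) = g0 x - g0 y"
    proof -
      have "(\<Sum>p\<in>ZG l. g0 p * phi p) = (\<Sum>p\<in>ZG l. (if p = x then 1 else 0) * g0 p) - (\<Sum>p\<in>ZG l. (if p = y then 1 else 0) * g0 p)"
        by (simp add: phi_def right_diff_distrib sum_subtractf mult.commute)
      also have "\<dots> = g0 x - g0 y" using delta[OF x] delta[OF y] by simp
      finally show ?thesis .
    qed
    define Bv where "Bv = ZB l g0 phi"
    define Xv where "Xv = (\<Sum>p\<in>ZG l. g0 p * phi p)"
    define Yv where "Yv = (\<Sum>p\<in>ZG l. (phi p)^2)"
    define Zv where "Zv = ZE l phi"
    have quad: "0 \<le> s * (2 * (Bv - m * Xv)) + s^2 * (Zv - m * Yv)" for s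
    proof -
      have z2: "\<forall>p. p \<notin> ZG l \<longrightarrow> g0 p + s * phi p = 0" using g0z pz by simp
      have s2: "(\<Sum>p\<in>ZG l. g0 p + s * phi p) = 0" using g0s ps by (simp add: sum.distrib sum_distrib_left[symmetric])
      have "m * (\<Sum>p\<in>ZG l. (g0 p + s * phi p)^2) \<le> ZE l (\<lambda>p. g0 p + s * phi p)" by (rule ray[OF z2 s2])
      moreover have "(\<Sum>p\<in>ZG l. (g0 p + s * phi p)^2) = 1 + 2 * s * Xv + s^2 * Yv"
        using g0n by (simp add: Xv_def Yv_def power2_sum sum.distrib sum_distrib_left power_mult_distrib algebra_simps)
      moreover have "ZE l (\<lambda>p. g0 p + s * phi p) = m + 2 * s * Bv + s^2 * Zv"
        by (simp add: ZE_add m_def Bv_def Zv_def)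
      ultimately have "m * (1 + 2 * s * Xv + s^2 * Yv) \<le> m + 2 * s * Bv + s^2 * Zv" by simp
      thus ?thesis by (simp add: algebra_simps)
    qed
    have "2 * (Bv - m * Xv) = 0" by (rule quad_zero[OF quad])
    hence "Bv = m * Xv" by simp
    thus ?thesis unfolding r_def using B X by (simp add: Bv_def Xv_def algebra_simps)
  qed
  have r0: "r x = 0" if x: "x \<in> ZG l" for x
  proof -
    have "(\<Sum>p\<in>ZG l. r p) = (\<Sum>p\<in>ZG l. ZLap l g0 p) - m * (\<Sum>p\<in>ZG l. g0 p)"
      by (simp add: r_def sum_subtractf sum_distrib_left)
    also have "\<dots> = 0" by (simp add: lap_sum_zero g0s)
    finally have "(\<Sum>p\<in>ZG l. r p) = 0" .
    moreover have "(\<Sum>p\<in>ZG l. r p) = (\<Sum>p\<in>ZG l. r x)" by (rule sum.cong[OF refl]) (rule rxy[OF _ x])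
    ultimately have "N * r x = 0" by (simp add: N_def)
    thus ?thesis using Npos by simp
  qed
  have nz: "\<exists>p\<in>ZG l. g0 p \<noteq> 0"
  proof (rule ccontr)
    assume "\<not> (\<exists>p\<in>ZG l. g0 p \<noteq> 0)"
    hence "(\<Sum>p\<in>ZG l. (g0 p)^2) = 0" by simp
    thus False using g0n by simp
  qed
  have "m \<in> eigset l"
    unfolding eigset_def using nz r0 by (auto simp: r_def)
  thus ?thesis using lower upper by blast
qed

definition sc :: "real \<Rightarrow> (int \<times> int \<Rightarrow> real) \<Rightarrow> (int \<times> int \<Rightarrow> real)" where
  "sc c f = (\<lambda>x. c * f x)"

interpretation FV: vector_space sc
  by unfold_locales (auto simp: sc_def fun_eq_iff algebra_simps)

lemma sum_fun_app: "(\<Sum>a\<in>A. (f a :: 'b \<Rightarrow> real)) x = (\<Sum>a\<in>A. f a x)"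
  by (induction A rule: infinite_finite_induct) auto

lemma ZB_sym: "ZB l g h = ZB l h g" by (simp add: ZB_def enb_def mult.commute)

definition restr :: "nat \<Rightarrow> (int \<times> int \<Rightarrow> real) \<Rightarrow> (int \<times> int \<Rightarrow> real)" where
  "restr l g = (\<lambda>p. if p \<in> ZG l then g p else 0)"

lemma ZLap_restr: "p \<in> ZG l \<Longrightarrow> ZLap l (restr l g) p = ZLap l g p"
  unfolding ZLap_def by (rule sum.cong) (auto simp: restr_def)

definition efun :: "nat \<Rightarrow> real \<Rightarrow> (int \<times> int \<Rightarrow> real)" where
  "efun l mu = restr l (SOME g. (\<exists>p\<in>ZG l. g p \<noteq> 0) \<and> (\<forall>p\<in>ZG l. ZLap l g p = mu * g p))"

lemma efun_props:
  assumes "mu \<in> eigset l"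
  shows "(\<exists>p\<in>ZG l. efun l mu p \<noteq> 0)" "(\<forall>p\<in>ZG l. ZLap l (efun l mu) p = mu * efun l mu p)"
    "(\<forall>p. p \<notin> ZG l \<longrightarrow> efun l mu p = 0)"
proof -
  define g where "g = (SOME g. (\<exists>p\<in>ZG l. g p \<noteq> 0) \<and> (\<forall>p\<in>ZG l. ZLap l g p = mu * g p))"
  have ex: "\<exists>g. (\<exists>p\<in>ZG l. g p \<noteq> 0) \<and> (\<forall>p\<in>ZG l. ZLap l g p = mu * g p)"
    using assms by (simp add: eigset_def)
  have "(\<exists>p\<in>ZG l. g p \<noteq> 0) \<and> (\<forall>p\<in>ZG l. ZLap l g p = mu * g p)"
    unfolding g_def by (rule someI_ex[OF ex])
  hence g1: "\<exists>p\<in>ZG l. g p \<noteq> 0" and g2: "\<forall>p\<in>ZG l. ZLap l g p = mu * g p" by auto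
  have e: "efun l mu = restr l g" by (simp add: efun_def g_def)
  show "\<exists>p\<in>ZG l. efun l mu p \<noteq> 0" using g1 by (auto simp: e restr_def)
  show "\<forall>p\<in>ZG l. ZLap l (efun l mu) p = mu * efun l mu p" using g2 by (simp add: e ZLap_restr) (simp add: restr_def)
  show "\<forall>p. p \<notin> ZG l \<longrightarrow> efun l mu p = 0" by (simp add: e restr_def)
qed

lemma efun_orth:
  assumes mu: "mu \<in> eigset l" and nu: "nu \<in> eigset l" and ne: "mu \<noteq> nu"
  shows "(\<Sum>p\<in>ZG l. efun l mu p * efun l nu p) = 0"
proof -
  let ?f = "efun l mu" and ?g = "efun l nu"
  have "ZB l ?f ?g = (\<Sum>p\<in>ZG l. ?g p * ZLap l ?f p)" by (simp add: green)
  also have "\<dots> = mu * (\<Sum>p\<in>ZG l. ?f p * ?g p)"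
    using efun_props(2)[OF mu] by (simp add: sum_distrib_left mult_ac)
  finally have 1: "ZB l ?f ?g = mu * (\<Sum>p\<in>ZG l. ?f p * ?g p)" .
  have "ZB l ?g ?f = (\<Sum>p\<in>ZG l. ?f p * ZLap l ?g p)" by (simp add: green)
  also have "\<dots> = nu * (\<Sum>p\<in>ZG l. ?f p * ?g p)"
    using efun_props(2)[OF nu] by (simp add: sum_distrib_left mult_ac)
  finally have 2: "ZB l ?g ?f = nu * (\<Sum>p\<in>ZG l. ?f p * ?g p)" .
  have "mu * (\<Sum>p\<in>ZG l. ?f p * ?g p) = ZB l ?f ?g" using 1 by simp
  also have "\<dots> = ZB l ?g ?f" by (rule ZB_sym)
  also have "\<dots> = nu * (\<Sum>p\<in>ZG l. ?f p * ?g p)" using 2 by simp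
  finally have "mu * (\<Sum>p\<in>ZG l. ?f p * ?g p) = nu * (\<Sum>p\<in>ZG l. ?f p * ?g p)" .
  hence "(mu - nu) * (\<Sum>p\<in>ZG l. ?f p * ?g p) = 0"
    by (simp add: algebra_simps)
  thus ?thesis using ne by simp
qed

lemma efun_pos:
  assumes mu: "mu \<in> eigset l"
  shows "(\<Sum>p\<in>ZG l. efun l mu p * efun l mu p) > 0"
proof -
  obtain p where p: "p \<in> ZG l" "efun l mu p \<noteq> 0" using efun_props(1)[OF mu] by blast
  have "efun l mu p * efun l mu p \<le> (\<Sum>p\<in>ZG l. efun l mu p * efun l mu p)"
    using member_le_sum[of p "ZG l" "\<lambda>p. efun l mu p * efun l mu p"] p by (simp add: finite_ZG)
  moreover have "(efun l mu p)^2 > 0" using p by simp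
  hence "efun l mu p * efun l mu p > 0" by (simp add: power2_eq_square)
  ultimately show ?thesis by linarith
qed

lemma efun_inj: "inj_on (efun l) (eigset l)"
proof (rule inj_onI)
  fix mu nu assume mu: "mu \<in> eigset l" and nu: "nu \<in> eigset l" and eq: "efun l mu = efun l nu"
  show "mu = nu"
  proof (rule ccontr)
    assume "mu \<noteq> nu"
    hence "(\<Sum>p\<in>ZG l. efun l mu p * efun l nu p) = 0" by (rule efun_orth[OF mu nu])
    thus False using efun_pos[OF mu] eq by simp
  qed
qed

lemma finite_eigset: "finite (eigset l)"
proof -
  define T where "T = (\<lambda>q. (\<lambda>p. if p = q then 1 else (0::real))) ` ZG l"
  define S where "S = efun l ` eigset l"
  have finT: "finite T" by (simp add: T_def finite_ZG)
  have span: "S \<subseteq> FV.span T"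
  proof
    fix f assume "f \<in> S"
    then obtain mu where mu: "mu \<in> eigset l" and f: "f = efun l mu" by (auto simp: S_def)
    have z: "\<forall>p. p \<notin> ZG l \<longrightarrow> f p = 0" using efun_props(3)[OF mu] f by simp
    have "f = (\<Sum>q\<in>ZG l. sc (f q) (\<lambda>p. if p = q then 1 else 0))"
    proof (rule ext)
      fix x
      show "f x = (\<Sum>q\<in>ZG l. sc (f q) (\<lambda>p. if p = q then 1 else 0)) x"
      proof (cases "x \<in> ZG l")
        case True
        thus ?thesis by (simp add: sum_fun_app sc_def finite_ZG if_distrib cong: if_cong)
      next
        case False
        hence "f x = 0" using z by blast
        moreover have "(\<Sum>q\<in>ZG l. sc (f q) (\<lambda>p. if p = q then 1 else 0) x) = 0"
          using False by (intro sum.neutral) (auto simp: sc_def)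
        ultimately show ?thesis by (simp add: sum_fun_app)
      qed
    qed
    also have "\<dots> \<in> FV.span T"
      by (intro FV.span_sum FV.span_scale FV.span_base) (auto simp: T_def)
    finally show "f \<in> FV.span T" .
  qed
  have indep: "FV.independent S"
    unfolding FV.independent_explicit_finite_subsets
  proof (intro allI impI ballI)
    fix S' u w assume S': "S' \<subseteq> S" "finite S'" and su: "(\<Sum>v\<in>S'. sc (u v) v) = 0" and w: "w \<in> S'"
    have pt: "(\<Sum>v\<in>S'. u v * v p) = 0" for p
      using fun_cong[OF su, of p] by (simp add: sum_fun_app sc_def)
    obtain nu where nu: "nu \<in> eigset l" and wn: "w = efun l nu" using w S' by (auto simp: S_def)
    have orth: "(\<Sum>p\<in>ZG l. v p * w p) = 0" if vS: "v \<in> S'" and vw: "v \<noteq> w" for v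
    proof -
      obtain mu where mu: "mu \<in> eigset l" and vm: "v = efun l mu" using vS S' by (auto simp: S_def)
      have "mu \<noteq> nu" using vw vm wn by auto
      thus ?thesis using efun_orth[OF mu nu] vm wn by simp
    qed
    have "0 = (\<Sum>p\<in>ZG l. (\<Sum>v\<in>S'. u v * v p) * w p)" using pt by simp
    also have "\<dots> = (\<Sum>v\<in>S'. u v * (\<Sum>p\<in>ZG l. v p * w p))"
      by (simp add: sum_distrib_left sum_distrib_right mult_ac sum.swap[of _ "ZG l"])
    also have "\<dots> = u w * (\<Sum>p\<in>ZG l. w p * w p)"
      using w orth S'(2) by (subst sum.remove[of _ w]) (auto intro!: sum.neutral)
    finally have "u w * (\<Sum>p\<in>ZG l. w p * w p) = 0" by simp
    moreover have "(\<Sum>p\<in>ZG l. w p * w p) > 0" using efun_pos[OF nu] wn by simp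
    ultimately show "u w = 0" by simp
  qed
  have "finite S" using FV.independent_span_bound[OF finT indep span] by simp
  thus ?thesis unfolding S_def using efun_inj finite_imageD by blast
qed

theorem proposition5p3:
  fixes l :: nat
  assumes "l \<ge> 1"
  shows "(15/2) / 5 ^ l \<le> E1_neumann l \<and> E1_neumann l \<le> 60 / 5 ^ l"
proof -
  have eq: "neumann_eigenvalues l = eigset l" by (simp add: eig_phi eigset_def)
  define X where "X = eigset l - {0}"
  have finX: "finite X" using finite_eigset by (simp add: X_def)
  obtain m where m: "m \<in> eigset l" and ml: "lamb l \<le> m" and mu: "m \<le> 30 / 5^l"
    using exists_eig[OF assms] by blast
  have lpos: "lamb l > 0" by (simp add: lamb_def)
  have mX: "m \<in> X" using m ml lpos by (auto simp: X_def)
  hence Xne: "X \<noteq> {}" by blast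
  have E1: "E1_neumann l = Min X" by (simp add: E1_neumann_def eq X_def)
  have "Min X \<in> X" using finX Xne by (rule Min_in)
  hence "lamb l \<le> Min X" using eig_lower[OF _ _ assms] by (auto simp: X_def)
  moreover have "Min X \<le> m" using finX mX by (rule Min_le)
  moreover have "(30::real) / 5^l \<le> 60 / 5^l" by (simp add: divide_right_mono)
  ultimately show ?thesis using mu by (simp add: E1 lamb_def)
qed

end
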